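(* Let $0<p_{\min}\le p_{\max}$ be vectors in $\mathbb{R}^n$ and $\mathcal{D}_p=\{p:p_{\min}\le p\le p_{\max}\}$. Let $\mathcal{I}:\mathbb{R}^n_{\ge0}\to\mathbb{R}^n$ be differentiable and standard, with $\mathcal{I}(\mathcal{D}_p)\subseteq\mathcal{D}_p$, and let $\kappa:\mathbb{R}^n\to\mathbb{R}^m$ be differentiable with $\nabla\kappa(p)\ge0$ having non-zero rows for all $p\in\mathcal{D}_p$. Consider the problem \[ \min_{p\in\mathcal{D}_p}\ \kappa(p)\quad\text{s.t.}\quad p\ge\mathcal{I}(p), \] and assume it is feasible. Then, with $x=\ln p$, $f_0(x)=\kappa(e^x)$ and $f(x)=\ln\mathcal{I}(e^x)$, the equivalent problem $\min_x f_0(x)$ s.t. $x\ge f(x)$ is Fast-Lipschitz, and consequently the unique fixed point $p^\star=\mathcal{I}(p^\star)$ in $\mathcal{D}_p$ is the unique Pareto optimal solution of the original problem (and the iteration $p^{k+1}=\mathcal{I}(p^k)$ converges to it).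
   Context: Inequalities are element-wise; $\ln$ and $\exp$ act componentwise. $\mathcal{I}$ is standard if for all $p,q\ge0$: (positivity) $\mathcal{I}(p)>0$; (monotonicity) $p\ge q\Rightarrow\mathcal{I}(p)\ge\mathcal{I}(q)$; (scalability) for all $c>1$, $\mathcal{I}(cp)<c\,\mathcal{I}(p)$. Gradient convention: $[\nabla\kappa(p)]_{ij}=\partial\kappa_j(p)/\partial p_i$. For a vector objective, a feasible $p$ is Pareto optimal (minimization) if no feasible $q$ has $\kappa(q)\le\kappa(p)$, $\kappa(q)\neq\kappa(p)$. A problem $\min g_0(x)$ s.t. $x\ge g(x)$ is Fast-Lipschitz if it admits a unique Pareto optimal solution, namely the unique solution of $x=g(x)$. *)

theory Defs
  imports "HOL-Analysis.Analysis"
begin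

text \<open>Order on real^'n is the library's componentwise order (x \<le> y iff all x$i \<le> y$i).
  Strict componentwise inequality is written out explicitly below.\<close>

definition standard_if :: "(real^'n \<Rightarrow> real^'n) \<Rightarrow> bool" where
  "standard_if I \<longleftrightarrow>
     (\<forall>p. 0 \<le> p \<longrightarrow> (\<forall>i. 0 < I p $ i)) \<and>
     (\<forall>p q. 0 \<le> q \<and> q \<le> p \<longrightarrow> I q \<le> I p) \<and>
     (\<forall>p (c::real). 0 \<le> p \<and> c > 1 \<longrightarrow> (\<forall>i. I (c *\<^sub>R p) $ i < c * I p $ i))"

definition pareto_optimal :: "('a \<Rightarrow> real^'m) \<Rightarrow> 'a set \<Rightarrow> 'a \<Rightarrow> bool" where
  "pareto_optimal obj F x \<longleftrightarrow>
     x \<in> F \<and> \<not> (\<exists>y\<in>F. obj y \<le> obj x \<and> obj y \<noteq> obj x)"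

definition fast_lipschitz :: "('a::ord \<Rightarrow> real^'m) \<Rightarrow> ('a \<Rightarrow> 'a) \<Rightarrow> 'a set \<Rightarrow> bool" where
  "fast_lipschitz g0 g X \<longleftrightarrow>
     (\<exists>!x. x \<in> X \<and> x = g x) \<and>
     (\<forall>x. x \<in> X \<and> x = g x \<longrightarrow>
        pareto_optimal g0 {y\<in>X. g y \<le> y} x \<and>
        (\<forall>y. pareto_optimal g0 {y\<in>X. g y \<le> y} y \<longrightarrow> y = x))"

definition vexp :: "real^'n \<Rightarrow> real^'n" where
  "vexp x = (\<chi> i. exp (x $ i))"

definition vln :: "real^'n \<Rightarrow> real^'n" where
  "vln x = (\<chi> i. ln (x $ i))"

end

theory Submission
  imports Defs
begin

lemma yates_le:
  fixes I :: "real^'n \<Rightarrow> real^'n"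
  assumes std: "standard_if I" and p: "\<forall>i. 0 < p$i" and q: "\<forall>i. 0 < q$i"
    and pI: "p \<le> I p" and qI: "I q \<le> q"
  shows "p \<le> q"
proof (rule ccontr)
  assume "\<not> p \<le> q"
  then obtain i0 where i0: "q$i0 < p$i0" by (auto simp: less_eq_vec_def not_le)
  define r where "r j = p$j / q$j" for j
  define c where "c = Max (range r)"
  have fin: "finite (range r)" by simp
  have "c \<in> range r" unfolding c_def by (rule Max_in) auto
  then obtain i where ci: "c = r i" by auto
  have rle: "r j \<le> c" for j unfolding c_def by (rule Max_ge) auto
  have "r i0 > 1" unfolding r_def using i0 q by (simp add: divide_simps)
  with rle have c1: "c > 1" by (meson less_le_trans)
  have pc: "p \<le> c *\<^sub>R q"
  proof -
    { fix j
      have "p$j = r j * q$j" unfolding r_def using q[rule_format, of j] by (simp add: divide_simps)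
      also have "\<dots> \<le> c * q$j" using rle[of j] q by (simp add: mult_right_mono less_imp_le)
      finally have "p$j \<le> (c *\<^sub>R q)$j" by simp }
    thus ?thesis by (simp add: less_eq_vec_def)
  qed
  have p0: "0 \<le> p" using p by (simp add: less_eq_vec_def less_imp_le)
  have q0: "0 \<le> q" using q by (simp add: less_eq_vec_def less_imp_le)
  have mono: "I p \<le> I (c *\<^sub>R q)" using std p0 pc unfolding standard_if_def by blast
  have sc: "I (c *\<^sub>R q) $ i < c * I q $ i" using std q0 c1 unfolding standard_if_def by blast
  have "p$i \<le> I p $ i" using pI by (simp add: less_eq_vec_def)
  also have "\<dots> \<le> I (c *\<^sub>R q) $ i" using mono by (simp add: less_eq_vec_def)
  also have "\<dots> < c * I q $ i" by (rule sc)
  also have "\<dots> \<le> c * q $ i" using qI c1 by (simp add: less_eq_vec_def)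
  also have "\<dots> = p $ i" using ci q[rule_format, of i] unfolding r_def by (simp add: divide_simps)
  finally show False by simp
qed

lemma deriv_comp:
  fixes \<kappa> :: "real^'n \<Rightarrow> real^'m"
  assumes "\<forall>x. \<kappa> differentiable (at x)"
  shows "((\<lambda>t. \<kappa> (p + t *\<^sub>R v) $ j) has_real_derivative
           (frechet_derivative \<kappa> (at (p + t *\<^sub>R v)) v $ j)) (at t)"
proof -
  define D where "D = frechet_derivative \<kappa> (at (p + t *\<^sub>R v))"
  have k: "(\<kappa> has_derivative D) (at (p + t *\<^sub>R v))"
    using assms frechet_derivative_works D_def by blast
  have g: "((\<lambda>t. p + t *\<^sub>R v) has_derivative (\<lambda>h. h *\<^sub>R v)) (at t)"
    by (auto intro!: derivative_eq_intros)
  have c: "((\<lambda>t. \<kappa> (p + t *\<^sub>R v)) has_derivative (\<lambda>h. D (h *\<^sub>R v))) (at t)"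
    using has_derivative_compose[OF g k] by simp
  have n: "((\<lambda>x. x $ j) has_derivative (\<lambda>x. x $ j)) (at y)" for y :: "real^'m"
    by (rule bounded_linear_imp_has_derivative) (rule bounded_linear_vec_nth)
  have c2: "((\<lambda>t. \<kappa> (p + t *\<^sub>R v) $ j) has_derivative (\<lambda>h. D (h *\<^sub>R v) $ j)) (at t)"
    using has_derivative_compose[OF c n] by simp
  have lin: "linear D" using k by (rule has_derivative_linear)
  have "(\<lambda>h. D (h *\<^sub>R v) $ j) = (*) (D v $ j)"
    using linear_scale[OF lin] by (auto simp: fun_eq_iff)
  with c2 show ?thesis unfolding D_def has_field_derivative_def by simp
qed

lemma expand:
  fixes D :: "real^'n \<Rightarrow> real^'m"
  assumes "linear D"
  shows "D v $ j = (\<Sum>i\<in>UNIV. v$i * D (axis i 1) $ j)"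
proof -
  have v: "v = (\<Sum>i\<in>UNIV. v$i *\<^sub>R axis i 1)"
    by (simp add: vec_eq_iff sum_component axis_def if_distrib sum.delta sum.delta' cong: if_cong)
  have "D v = (\<Sum>i\<in>UNIV. v$i *\<^sub>R D (axis i 1))"
    by (subst v) (simp add: linear_sum[OF assms] linear_scale[OF assms])
  thus ?thesis by (simp add: sum_component)
qed

lemma limit_fix:
  fixes I :: "real^'n \<Rightarrow> real^'n"
  assumes pmin_pos: "\<forall>i. 0 < pmin $ i"
    and I_diff: "\<forall>p. 0 \<le> p \<longrightarrow> I differentiable (at p within {q. 0 \<le> q})"
    and sB: "\<And>k. s k \<in> {pmin..pmax}"
    and sI: "\<And>k. s (Suc k) = I (s k)"
    and mono: "\<And>i. monoseq (\<lambda>k. s k $ i)"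
  shows "\<exists>L\<in>{pmin..pmax}. s \<longlonglongrightarrow> L \<and> I L = L"
proof -
  have cv: "convergent (\<lambda>k. s k $ i)" for i
  proof (rule Bseq_monoseq_convergent[OF _ mono])
    have "norm (s k $ i) \<le> pmax $ i" for k
      proof -
      have "pmin $ i \<le> s k $ i" "s k $ i \<le> pmax $ i" using sB[of k] by (auto simp: less_eq_vec_def)
      thus ?thesis using pmin_pos[rule_format, of i] by simp
    qed
    thus "Bseq (\<lambda>k. s k $ i)" by (rule BseqI')
  qed
  define L where "L = (\<chi> i. lim (\<lambda>k. s k $ i))"
  have Li: "(\<lambda>k. s k $ i) \<longlonglongrightarrow> L $ i" for i
    unfolding L_def using cv[of i] by (simp add: convergent_LIMSEQ_iff)
  have sL: "s \<longlonglongrightarrow> L" by (rule vec_tendstoI) (rule Li)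
  have LB: "L \<in> {pmin..pmax}"
  proof -
    { fix i
      have "pmin $ i \<le> L $ i"
        by (rule LIMSEQ_le_const[OF Li]) (use sB in \<open>auto simp: less_eq_vec_def\<close>)
      moreover have "L $ i \<le> pmax $ i"
        by (rule LIMSEQ_le_const2[OF Li]) (use sB in \<open>auto simp: less_eq_vec_def\<close>)
      ultimately have "pmin $ i \<le> L $ i \<and> L $ i \<le> pmax $ i" by simp }
    thus ?thesis by (simp add: less_eq_vec_def)
  qed
  have L0: "0 \<le> L" using LB pmin_pos by (auto simp: less_eq_vec_def intro: less_imp_le order.strict_trans2)
  have cont: "continuous (at L within {q. 0 \<le> q}) I"
    using I_diff L0 differentiable_imp_continuous_within by blast
  have s0: "s k \<in> {q. 0 \<le> q}" for k
    using sB[of k] pmin_pos by (auto simp: less_eq_vec_def intro: less_imp_le order.strict_trans2)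
  have "(\<lambda>k. I (s k)) \<longlonglongrightarrow> I L"
    by (rule continuous_within_tendsto_compose'[OF cont s0 sL])
  moreover have "(\<lambda>k. I (s k)) \<longlonglongrightarrow> L"
    using LIMSEQ_Suc[OF sL] by (simp add: sI)
  ultimately have "I L = L" by (rule LIMSEQ_unique)
  with LB sL show ?thesis by blast
qed


lemma kappa_mono:
  fixes \<kappa> :: "real^'n \<Rightarrow> real^'m"
  assumes \<kappa>_diff: "\<forall>p. \<kappa> differentiable (at p)"
    and grad_nonneg: "\<forall>p\<in>{pmin..pmax}. \<forall>i j.
                        0 \<le> frechet_derivative \<kappa> (at p) (axis i 1) $ j"
    and grad_rows: "\<forall>p\<in>{pmin..pmax}. \<forall>i. \<exists>j.
                        frechet_derivative \<kappa> (at p) (axis i 1) $ j \<noteq> 0"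
    and pB: "p \<in> {pmin..pmax}" and qB: "q \<in> {pmin..pmax}" and pq: "p \<le> q"
  shows "\<kappa> p \<le> \<kappa> q \<and> (p \<noteq> q \<longrightarrow> \<kappa> p \<noteq> \<kappa> q)"
proof -
  define v where "v = q - p"
  have v0: "0 \<le> v $ i" for i using pq by (simp add: v_def less_eq_vec_def)
  have gB: "p + t *\<^sub>R v \<in> {pmin..pmax}" if "0 \<le> t" "t \<le> 1" for t
  proof -
    { fix i
      have a: "pmin $ i \<le> p $ i" "p $ i \<le> q $ i" "q $ i \<le> pmax $ i"
        using pB qB pq by (auto simp: less_eq_vec_def)
      have "0 \<le> t * (q$i - p$i)" using that a by simp
      moreover have "t * (q$i - p$i) \<le> q$i - p$i"
        using that a by (simp add: mult_left_le_one_le)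
      ultimately have "pmin $ i \<le> (p + t *\<^sub>R v) $ i \<and> (p + t *\<^sub>R v) $ i \<le> pmax $ i"
        using a by (simp add: v_def) }
    thus ?thesis by (simp add: less_eq_vec_def)
  qed
  define Dt where "Dt t = frechet_derivative \<kappa> (at (p + t *\<^sub>R v))" for t
  have lin: "linear (Dt t)" for t
    using \<kappa>_diff frechet_derivative_works has_derivative_linear unfolding Dt_def by blast
  have der: "((\<lambda>t. \<kappa> (p + t *\<^sub>R v) $ j) has_real_derivative Dt t v $ j) (at t)" for t j
    unfolding Dt_def by (rule deriv_comp[OF \<kappa>_diff])
  have dnn: "0 \<le> Dt t v $ j" if "0 \<le> t" "t \<le> 1" for t j
  proof -
    have "0 \<le> Dt t (axis i 1) $ j" for i
      using grad_nonneg gB[OF that] unfolding Dt_def by blast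
    hence "0 \<le> (\<Sum>i\<in>UNIV. v$i * Dt t (axis i 1) $ j)"
      using v0 by (intro sum_nonneg) (simp add: mult_nonneg_nonneg)
    thus ?thesis by (subst expand[OF lin])
  qed
  have e0: "p + 0 *\<^sub>R v = p" and e1: "p + 1 *\<^sub>R v = q" by (simp_all add: v_def)
  have le: "\<kappa> p $ j \<le> \<kappa> q $ j" for j
  proof -
    obtain z where z: "0 < z" "z < 1"
      "\<kappa> (p + 1 *\<^sub>R v) $ j - \<kappa> (p + 0 *\<^sub>R v) $ j = (1 - 0) * Dt z v $ j"
      using MVT2[of 0 1 "\<lambda>t. \<kappa> (p + t *\<^sub>R v) $ j" "\<lambda>t. Dt t v $ j"] der by auto
    moreover have "0 \<le> Dt z v $ j" by (rule dnn) (use z in auto)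
    ultimately show ?thesis unfolding e0 e1 by simp
  qed
  have ne: "\<kappa> p \<noteq> \<kappa> q" if "p \<noteq> q"
  proof
    assume eq: "\<kappa> p = \<kappa> q"
    from that pq obtain i0 where i0: "p $ i0 < q $ i0"
      by (metis less_eq_vec_def order_less_le vec_eq_iff)
    hence vi0: "0 < v $ i0" by (simp add: v_def)
    have pos: "0 < (\<Sum>j\<in>UNIV. Dt t v $ j)" if tt: "0 \<le> t" "t \<le> 1" for t
    proof -
      obtain j0 where j0: "Dt t (axis i0 1) $ j0 \<noteq> 0"
        using grad_rows gB[OF tt] unfolding Dt_def by blast
      have nn1: "0 \<le> Dt t (axis i 1) $ k" for i k
        using grad_nonneg gB[OF tt] unfolding Dt_def by blast
      have "0 < (\<Sum>j\<in>UNIV. Dt t (axis i0 1) $ j)"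
        by (rule sum_pos2[of UNIV j0]) (use j0 nn1 in \<open>auto simp: order_less_le\<close>)
      hence "0 < v $ i0 * (\<Sum>j\<in>UNIV. Dt t (axis i0 1) $ j)" using vi0 by simp
      also have "\<dots> = (\<Sum>j\<in>UNIV. v $ i0 * Dt t (axis i0 1) $ j)" by (simp add: sum_distrib_left)
      also have "\<dots> \<le> (\<Sum>j\<in>UNIV. Dt t v $ j)"
        apply (rule sum_mono) apply (subst expand[OF lin, of t v])
        by (rule member_le_sum) (use v0 nn1 in auto)
      finally show ?thesis .
    qed
    have dsum: "((\<lambda>t. \<Sum>j\<in>UNIV. \<kappa> (p + t *\<^sub>R v) $ j) has_real_derivative (\<Sum>j\<in>UNIV. Dt t v $ j)) (at t)" for t
      by (rule DERIV_sum) (rule der)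
    have "\<exists>z>0. z < 1 \<and> (\<Sum>j\<in>UNIV. \<kappa> (p + 1 *\<^sub>R v) $ j) - (\<Sum>j\<in>UNIV. \<kappa> (p + 0 *\<^sub>R v) $ j)
        = (1 - 0) * (\<Sum>j\<in>UNIV. Dt z v $ j)"
      by (rule MVT2) (rule zero_less_one, rule dsum)
    then obtain z where z: "0 < z" "z < 1"
      "(\<Sum>j\<in>UNIV. \<kappa> (p + 1 *\<^sub>R v) $ j) - (\<Sum>j\<in>UNIV. \<kappa> (p + 0 *\<^sub>R v) $ j)
        = (1 - 0) * (\<Sum>j\<in>UNIV. Dt z v $ j)" by blast
    have "0 < (\<Sum>j\<in>UNIV. Dt z v $ j)" by (rule pos) (use z in auto)
    with z eq show False unfolding e0 e1 by simp
  qed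
  show ?thesis using le ne by (simp add: less_eq_vec_def)
qed


lemma vexp_vln: "\<forall>i. 0 < x $ i \<Longrightarrow> vexp (vln x) = x"
  by (simp add: vexp_def vln_def vec_eq_iff)

lemma vln_le_iff: "\<forall>i. 0 < x $ i \<Longrightarrow> \<forall>i. 0 < y $ i \<Longrightarrow> vln x \<le> vln y \<longleftrightarrow> x \<le> y"
  by (simp add: vln_def less_eq_vec_def)

lemma vln_eq_iff: "\<forall>i. 0 < x $ i \<Longrightarrow> \<forall>i. 0 < y $ i \<Longrightarrow> vln x = vln y \<longleftrightarrow> x = y"
  by (simp add: vln_def vec_eq_iff)

lemma pareto_transfer:
  fixes \<kappa> :: "real^'n \<Rightarrow> real^'m"
  assumes F: "\<And>x. x \<in> F \<Longrightarrow> \<forall>i. 0 < x $ i" and q: "\<forall>i. 0 < q $ i"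
  shows "pareto_optimal (\<lambda>x. \<kappa> (vexp x)) (vln ` F) (vln q) \<longleftrightarrow> pareto_optimal \<kappa> F q"
proof -
  have mem: "vln q \<in> vln ` F \<longleftrightarrow> q \<in> F"
    using F q vln_eq_iff by blast
  show ?thesis
    unfolding pareto_optimal_def mem using F q by (auto simp: vexp_vln)
qed

theorem mainTheorem3:
  fixes pmin pmax :: "real^'n"
    and I :: "real^'n \<Rightarrow> real^'n"
    and \<kappa> :: "real^'n \<Rightarrow> real^'m"
  assumes pmin_pos: "\<forall>i. 0 < pmin $ i"
    and pmin_le: "pmin \<le> pmax"
    and I_diff: "\<forall>p. 0 \<le> p \<longrightarrow> I differentiable (at p within {q. 0 \<le> q})"
    and I_std: "standard_if I"
    and I_maps: "I ` {pmin..pmax} \<subseteq> {pmin..pmax}"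
    and \<kappa>_diff: "\<forall>p. \<kappa> differentiable (at p)"
    and grad_nonneg: "\<forall>p\<in>{pmin..pmax}. \<forall>i j.
                        0 \<le> frechet_derivative \<kappa> (at p) (axis i 1) $ j"
    and grad_rows: "\<forall>p\<in>{pmin..pmax}. \<forall>i. \<exists>j.
                        frechet_derivative \<kappa> (at p) (axis i 1) $ j \<noteq> 0"
    and feasible: "\<exists>p\<in>{pmin..pmax}. I p \<le> p"
  shows "fast_lipschitz (\<lambda>x. \<kappa> (vexp x)) (\<lambda>x. vln (I (vexp x))) (vln ` {pmin..pmax})
       \<and> (\<exists>!p. p \<in> {pmin..pmax} \<and> I p = p)
       \<and> (\<forall>p. p \<in> {pmin..pmax} \<and> I p = p \<longrightarrow>
            pareto_optimal \<kappa> {q \<in> {pmin..pmax}. I q \<le> q} p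
            \<and> (\<forall>q. pareto_optimal \<kappa> {q \<in> {pmin..pmax}. I q \<le> q} q \<longrightarrow> q = p)
            \<and> (\<forall>p0\<in>{pmin..pmax}. (\<lambda>k. (I ^^ k) p0) \<longlonglongrightarrow> p))"
  proof -
  let ?B = "{pmin..pmax}"
  have pos: "\<forall>i. 0 < x $ i" if "x \<in> ?B" for x
    using that pmin_pos by (auto simp: less_eq_vec_def intro: order.strict_trans2)
  have nonneg: "0 \<le> x" if "x \<in> ?B" for x
    using pos[OF that] by (simp add: less_eq_vec_def less_imp_le)
  have Imono: "I x \<le> I y" if "0 \<le> x" "x \<le> y" for x y
    using I_std that unfolding standard_if_def by blast
  have IB: "I x \<in> ?B" if "x \<in> ?B" for x using I_maps that by blast
  have iterB: "(I ^^ k) x \<in> ?B" if "x \<in> ?B" for x k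
    using that by (induct k) (simp_all add: IB del: atLeastAtMost_iff)
  have itmono: "(I ^^ k) x \<le> (I ^^ k) y" if "x \<in> ?B" "y \<in> ?B" "x \<le> y" for x y k
  proof (induct k)
    case 0 then show ?case using that by simp
  next
    case (Suc k) then show ?case using Imono nonneg iterB that by simp
  qed
  have fixle: "p \<le> q" if "p \<in> ?B" "I p = p" "q \<in> ?B" "I q \<le> q" for p q
    by (rule yates_le[OF I_std pos pos]) (use that in auto)
  have uniq: "p = q" if "p \<in> ?B" "I p = p" "q \<in> ?B" "I q = q" for p q
    using fixle[of p q] fixle[of q p] that by (auto intro: order.antisym)
  have pminB: "pmin \<in> ?B" and pmaxB: "pmax \<in> ?B" using pmin_le by auto
  define up where "up k = (I ^^ k) pmin" for k
  define dn where "dn k = (I ^^ k) pmax" for k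
  have up_inc: "up k \<le> up (Suc k)" for k
    using itmono[OF pminB IB[OF pminB], of k] IB[OF pminB]
    unfolding up_def by (simp add: funpow_Suc_right del: funpow.simps)
  have dn_dec: "dn (Suc k) \<le> dn k" for k
    using itmono[OF IB[OF pmaxB] pmaxB, of k] IB[OF pmaxB]
    unfolding dn_def by (simp add: funpow_Suc_right del: funpow.simps)
  obtain Lu where Lu: "Lu \<in> ?B" "up \<longlonglongrightarrow> Lu" "I Lu = Lu"
  proof -
    have "\<exists>L\<in>?B. up \<longlonglongrightarrow> L \<and> I L = L"
    proof (rule limit_fix[OF pmin_pos I_diff])
      show "up k \<in> ?B" for k unfolding up_def by (rule iterB[OF pminB])
      show "up (Suc k) = I (up k)" for k unfolding up_def by simp
      show "monoseq (\<lambda>k. up k $ i)" for i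
        unfolding monoseq_Suc using up_inc by (simp add: less_eq_vec_def)
    qed
    thus ?thesis using that by blast
  qed
  obtain Ld where Ld: "Ld \<in> ?B" "dn \<longlonglongrightarrow> Ld" "I Ld = Ld"
  proof -
    have "\<exists>L\<in>?B. dn \<longlonglongrightarrow> L \<and> I L = L"
    proof (rule limit_fix[OF pmin_pos I_diff])
      show "dn k \<in> ?B" for k unfolding dn_def by (rule iterB[OF pmaxB])
      show "dn (Suc k) = I (dn k)" for k unfolding dn_def by simp
      show "monoseq (\<lambda>k. dn k $ i)" for i
        unfolding monoseq_Suc using dn_dec by (simp add: less_eq_vec_def)
    qed
    thus ?thesis using that by blast
  qed
  have LuLd: "Lu = Ld" using uniq Lu Ld by blast
  define ps where "ps = Lu"
  have psB: "ps \<in> ?B" and psI: "I ps = ps" using Lu unfolding ps_def by auto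
  have ex1: "\<exists>!p. p \<in> ?B \<and> I p = p"
    using psB psI uniq by blast
  have conv: "(\<lambda>k. (I ^^ k) p0) \<longlonglongrightarrow> ps" if p0: "p0 \<in> ?B" for p0
  proof (rule vec_tendstoI)
    fix i
    have a: "(\<lambda>k. up k $ i) \<longlonglongrightarrow> ps $ i"
      using tendsto_vec_nth[OF Lu(2)] unfolding ps_def .
    have b: "(\<lambda>k. dn k $ i) \<longlonglongrightarrow> ps $ i"
      using tendsto_vec_nth[OF Ld(2)] unfolding ps_def LuLd .
    have l: "up k $ i \<le> (I ^^ k) p0 $ i" for k
      using itmono[OF pminB p0, of k] p0 unfolding up_def by (simp add: less_eq_vec_def)
    have r: "(I ^^ k) p0 $ i \<le> dn k $ i" for k
      using itmono[OF p0 pmaxB, of k] p0 unfolding dn_def by (simp add: less_eq_vec_def)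
    show "(\<lambda>k. (I ^^ k) p0 $ i) \<longlonglongrightarrow> ps $ i"
      by (rule tendsto_sandwich[OF _ _ a b]) (use l r in auto)
  qed
  define F where "F = {q \<in> ?B. I q \<le> q}"
  have FB: "\<And>x. x \<in> F \<Longrightarrow> \<forall>i. 0 < x $ i" using pos unfolding F_def by blast
  have psF: "ps \<in> F" using psB psI unfolding F_def by simp
  have dom: "\<kappa> ps \<le> \<kappa> q \<and> (q \<noteq> ps \<longrightarrow> \<kappa> ps \<noteq> \<kappa> q)" if "q \<in> F" for q
  proof -
    have "ps \<le> q" using fixle[OF psB psI] that unfolding F_def by auto
    thus ?thesis using kappa_mono[OF \<kappa>_diff grad_nonneg grad_rows psB, of q] that
      unfolding F_def by auto
  qed
  have poF: "pareto_optimal \<kappa> F ps"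
    unfolding pareto_optimal_def using psF dom by (auto intro: order.antisym)
  have uqF: "q = ps" if "pareto_optimal \<kappa> F q" for q
  proof (rule ccontr)
    assume "q \<noteq> ps"
    moreover have "q \<in> F" using that unfolding pareto_optimal_def by blast
    ultimately show False using that dom[of q] psF unfolding pareto_optimal_def by auto
  qed
  have FX: "{y \<in> vln ` ?B. vln (I (vexp y)) \<le> y} = vln ` F"
  proof -
    have "vln (I (vexp (vln q))) \<le> vln q \<longleftrightarrow> I q \<le> q" if "q \<in> ?B" for q
      using vexp_vln[OF pos[OF that]] vln_le_iff pos[OF IB[OF that]] pos[OF that] by simp
    thus ?thesis unfolding F_def by auto
  qed
  have fl: "fast_lipschitz (\<lambda>x. \<kappa> (vexp x)) (\<lambda>x. vln (I (vexp x))) (vln ` ?B)"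
  proof -
    have fixX: "x = vln ps" if xX: "x \<in> vln ` ?B" "x = vln (I (vexp x))" for x
    proof -
      obtain q where q: "q \<in> ?B" "x = vln q" using xX by blast
      have "vln q = vln (I q)" using xX q vexp_vln[OF pos[OF q(1)]] by simp
      hence "q = I q" using vln_eq_iff pos[OF q(1)] pos[OF IB[OF q(1)]] by blast
      thus ?thesis using uniq[OF q(1) _ psB psI] q by simp
    qed
    have psX: "vln ps \<in> vln ` ?B \<and> vln ps = vln (I (vexp (vln ps)))"
      using psB psI vexp_vln[OF pos[OF psB]] by simp
    have po: "pareto_optimal (\<lambda>x. \<kappa> (vexp x)) (vln ` F) (vln ps)"
      using pareto_transfer[where F=F and \<kappa>=\<kappa>, OF FB pos[OF psB]] poF by simp
    have uq: "y = vln ps" if "pareto_optimal (\<lambda>x. \<kappa> (vexp x)) (vln ` F) y" for y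
    proof -
      have "y \<in> vln ` F" using that unfolding pareto_optimal_def by blast
      then obtain q where q: "q \<in> F" "y = vln q" by blast
      have "pareto_optimal \<kappa> F q" using pareto_transfer[where F=F and \<kappa>=\<kappa>, OF FB FB[OF q(1)]] that q by simp
      thus ?thesis using uqF q by simp
    qed
    show ?thesis unfolding fast_lipschitz_def FX
    proof (intro conjI allI impI)
      show "\<exists>!x. x \<in> vln ` ?B \<and> x = vln (I (vexp x))"
        by (rule ex1I[of _ "vln ps"]) (use psX fixX in blast)+
      fix x assume "x \<in> vln ` ?B \<and> x = vln (I (vexp x))"
      hence xe: "x = vln ps" using fixX by blast
      show "pareto_optimal (\<lambda>x. \<kappa> (vexp x)) (vln ` F) x" using po xe by simp
      fix y assume "pareto_optimal (\<lambda>x. \<kappa> (vexp x)) (vln ` F) y"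
      thus "y = x" using uq xe by simp
    qed
  qed
  have rest: "\<forall>p. p \<in> ?B \<and> I p = p \<longrightarrow>
            pareto_optimal \<kappa> {q \<in> ?B. I q \<le> q} p
            \<and> (\<forall>q. pareto_optimal \<kappa> {q \<in> ?B. I q \<le> q} q \<longrightarrow> q = p)
            \<and> (\<forall>p0\<in>?B. (\<lambda>k. (I ^^ k) p0) \<longlonglongrightarrow> p)"
  proof (intro allI impI)
    fix p assume "p \<in> ?B \<and> I p = p"
    hence pe: "p = ps" using uniq psB psI by blast
    show "pareto_optimal \<kappa> {q \<in> ?B. I q \<le> q} p
            \<and> (\<forall>q. pareto_optimal \<kappa> {q \<in> ?B. I q \<le> q} q \<longrightarrow> q = p)
            \<and> (\<forall>p0\<in>?B. (\<lambda>k. (I ^^ k) p0) \<longlonglongrightarrow> p)"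
      unfolding pe F_def[symmetric] using poF uqF conv by blast
  qed
  show ?thesis using fl ex1 rest by blast
qed

end
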